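(* Let $s,t\ge 0$, $r\in\mathbb R$, $\alpha,\beta\in\mathbb R$, and let $$B=\exp\!\big(r p_0+t\,R_{\beta/2}\,p_1\,R_{-\beta/2}\big)\exp\!\big(s\,R_\alpha f_1 R_{-\alpha}\big)\in\mathrm{SL}_3(\mathbb R),$$ where $p_0=\mathrm{diag}(2,-1,-1)$, $p_1=\mathrm{diag}(0,\tfrac12,-\tfrac12)$, $f_1=\begin{pmatrix}0&1&0\\1&0&0\\0&0&0\end{pmatrix}$. Let $\rho\in\hom_0(\mathrm{PSL}_2(\mathbb Z),\mathrm{Isom}(X))$ be given by $\rho(a)([M])=[BB^TM^*]$ and $\rho(b)([M])=[R_{2\pi/3}M]$, and set $\vartheta=2\alpha-\beta$. Then $$\mathrm{tr}(\rho(baba))=\mathrm{tr}(\rho(baba)^{-1})=-\tfrac32\cosh(2s)\cosh(2t)+\tfrac94\cosh^2(2s)-\tfrac34-3\sin^2(\vartheta)\sinh^4(s)\sinh^2(t).$$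
   Context: $X=\mathrm{SL}_3(\mathbb R)/\mathrm{SO}(3)$; $\mathrm{SL}_3(\mathbb R)$ acts by $[M]\mapsto[gM]$ and orientation-preserving isometries are identified with matrices in $\mathrm{SL}_3(\mathbb R)$; $M^*=(M^{-1})^T$, and $[M]\mapsto[BB^TM^*]$ is the inversion at $[B]$. $R_\theta=\begin{pmatrix}1&0&0\\0&\cos\theta&-\sin\theta\\0&\sin\theta&\cos\theta\end{pmatrix}$ and $\exp$ is the matrix exponential. $\mathrm{PSL}_2(\mathbb Z)=\langle a,b\mid a^2=b^3=1\rangle$; $\hom_0(\mathrm{PSL}_2(\mathbb Z),\mathrm{Isom}(X))$ is the set of homomorphisms with $\rho(a)$ an inversion and $\rho(b)$ conjugate to $[M]\mapsto[R_{2\pi/3}M]$. *)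

theory Defs
  imports "HOL-Analysis.Analysis"
begin

type_synonym mat3 = "real^3^3"

text \<open>Matrix powers and the matrix exponential (the library's exp on real^3^3
 would be entrywise, so we define the matrix exponential by its power series).\<close>
fun matpow :: "mat3 \<Rightarrow> nat \<Rightarrow> mat3" where
  "matpow A 0 = mat 1"
| "matpow A (Suc n) = A ** matpow A n"

definition mexp :: "mat3 \<Rightarrow> mat3" where
  "mexp A = (\<Sum>n. (1 / fact n) *\<^sub>R matpow A n)"

definition mstar :: "mat3 \<Rightarrow> mat3" where
  "mstar M = transpose (matrix_inv M)"

definition SL3 :: "mat3 set" where
  "SL3 = {M. det M = 1}"

definition SO3 :: "mat3 set" where
  "SO3 = {K. transpose K ** K = mat 1 \<and> det K = 1}"

text \<open>Points of X = SL3(R)/SO(3) are the cosets [M] = M SO(3).\<close>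
definition cls :: "mat3 \<Rightarrow> mat3 set" where
  "cls M = (\<lambda>K. M ** K) ` SO3"

definition Xpts :: "mat3 set set" where
  "Xpts = cls ` SL3"

definition act :: "mat3 \<Rightarrow> mat3 set \<Rightarrow> mat3 set" where
  "act g P = (\<lambda>M. g ** M) ` P"

definition inv_at :: "mat3 \<Rightarrow> mat3 set \<Rightarrow> mat3 set" where
  "inv_at B P = (\<lambda>M. B ** transpose B ** mstar M) ` P"

definition iso_matrix :: "(mat3 set \<Rightarrow> mat3 set) \<Rightarrow> mat3" where
  "iso_matrix F = (THE g. g \<in> SL3 \<and> (\<forall>P\<in>Xpts. F P = act g P))"

definition Rot :: "real \<Rightarrow> mat3" where
  "Rot \<theta> = vector [vector [1, 0, 0], vector [0, cos \<theta>, - sin \<theta>], vector [0, sin \<theta>, cos \<theta>]]"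

definition p0 :: mat3 where
  "p0 = vector [vector [2, 0, 0], vector [0, -1, 0], vector [0, 0, -1]]"

definition p1 :: mat3 where
  "p1 = vector [vector [0, 0, 0], vector [0, 1/2, 0], vector [0, 0, -1/2]]"

definition f1 :: mat3 where
  "f1 = vector [vector [0, 1, 0], vector [1, 0, 0], vector [0, 0, 0]]"

definition Bmat :: "real \<Rightarrow> real \<Rightarrow> real \<Rightarrow> real \<Rightarrow> real \<Rightarrow> mat3" where
  "Bmat r s t \<alpha> \<beta> =
     mexp (r *\<^sub>R p0 + t *\<^sub>R (Rot (\<beta>/2) ** p1 ** Rot (-\<beta>/2)))
     ** mexp (s *\<^sub>R (Rot \<alpha> ** f1 ** Rot (-\<alpha>)))"

definition rho_a :: "real \<Rightarrow> real \<Rightarrow> real \<Rightarrow> real \<Rightarrow> real \<Rightarrow> mat3 set \<Rightarrow> mat3 set" where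
  "rho_a r s t \<alpha> \<beta> = inv_at (Bmat r s t \<alpha> \<beta>)"

definition rho_b :: "mat3 set \<Rightarrow> mat3 set" where
  "rho_b = act (Rot (2 * pi / 3))"

end

theory Submission
  imports Defs
begin

definition M3 :: "real\<Rightarrow>real\<Rightarrow>real\<Rightarrow>real\<Rightarrow>real\<Rightarrow>real\<Rightarrow>real\<Rightarrow>real\<Rightarrow>real\<Rightarrow>mat3" where
  "M3 a b c d e f g h i = vector [vector [a,b,c], vector [d,e,f], vector [g,h,i]]"

lemma M3_nth:
  "M3 a b c d e f g h i $ 1 $ 1 = a" "M3 a b c d e f g h i $ 1 $ 2 = b" "M3 a b c d e f g h i $ 1 $ 3 = c"
  "M3 a b c d e f g h i $ 2 $ 1 = d" "M3 a b c d e f g h i $ 2 $ 2 = e" "M3 a b c d e f g h i $ 2 $ 3 = f"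
  "M3 a b c d e f g h i $ 3 $ 1 = g" "M3 a b c d e f g h i $ 3 $ 2 = h" "M3 a b c d e f g h i $ 3 $ 3 = i"
  by (simp_all add: M3_def)

lemma M3_eq_iff: "(A::mat3) = B \<longleftrightarrow> (\<forall>i j. A$i$j = B$i$j)"
  by (simp add: vec_eq_iff)

lemma mat3_M3: "(A::mat3) = M3 (A$1$1) (A$1$2) (A$1$3) (A$2$1) (A$2$2) (A$2$3) (A$3$1) (A$3$2) (A$3$3)"
  unfolding M3_eq_iff by (simp add: forall_3 M3_nth)

lemma M3_inj: "M3 a b c d e f g h i = M3 a' b' c' d' e' f' g' h' i' \<longleftrightarrow>
   a = a' \<and> b = b' \<and> c = c' \<and> d = d' \<and> e = e' \<and> f = f' \<and> g = g' \<and> h = h' \<and> i = i'"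
  by (metis M3_nth)

lemma M3_mult: "M3 a b c d e f g h i ** M3 a' b' c' d' e' f' g' h' i' =
  M3 (a*a'+b*d'+c*g') (a*b'+b*e'+c*h') (a*c'+b*f'+c*i')
     (d*a'+e*d'+f*g') (d*b'+e*e'+f*h') (d*c'+e*f'+f*i')
     (g*a'+h*d'+i*g') (g*b'+h*e'+i*h') (g*c'+h*f'+i*i')"
  unfolding M3_eq_iff by (simp add: forall_3 M3_nth matrix_matrix_mult_def sum_3)

lemma M3_transpose: "transpose (M3 a b c d e f g h i) = M3 a d g b e h c f i"
  unfolding M3_eq_iff by (simp add: forall_3 M3_nth transpose_def)

lemma M3_trace: "trace (M3 a b c d e f g h i) = a + e + i"
  by (simp add: trace_def sum_3 M3_nth)

lemma M3_det: "det (M3 a b c d e f g h i) = a*e*i + b*f*g + c*d*h - a*f*h - b*d*i - c*e*g"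
  by (simp add: det_3 M3_nth)

lemma M3_one: "mat 1 = M3 1 0 0 0 1 0 0 0 1"
  by (subst mat3_M3) (simp add: mat_def)

lemma M3_add: "M3 a b c d e f g h i + M3 a' b' c' d' e' f' g' h' i' =
   M3 (a+a') (b+b') (c+c') (d+d') (e+e') (f+f') (g+g') (h+h') (i+i')"
  unfolding M3_eq_iff by (simp add: forall_3 M3_nth)

lemma M3_scale: "x *\<^sub>R M3 a b c d e f g h i = M3 (x*a) (x*b) (x*c) (x*d) (x*e) (x*f) (x*g) (x*h) (x*i)"
  unfolding M3_eq_iff by (simp add: forall_3 M3_nth)

lemma Rot_M3: "Rot th = M3 1 0 0 0 (cos th) (- sin th) 0 (sin th) (cos th)"
  by (simp add: Rot_def M3_def)

lemma Rot_mult: "Rot a ** Rot b = Rot (a + b)"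
  by (simp add: Rot_M3 M3_mult cos_add sin_add M3_inj)

lemma Rot_0: "Rot 0 = mat 1"
  by (simp add: Rot_M3 M3_one)

lemma Rot_transpose: "transpose (Rot a) = Rot (-a)"
  by (simp add: Rot_M3 M3_transpose)

lemma Rot_inv: "Rot (-a) ** Rot a = mat 1" "Rot a ** Rot (-a) = mat 1"
  by (simp_all add: Rot_mult Rot_0)

lemma Rot_SO3: "Rot a \<in> SO3"
  by (simp add: SO3_def Rot_transpose Rot_inv) (simp add: Rot_M3 M3_det)

lemma minv_eq: fixes A B :: mat3 assumes "A ** B = mat 1" shows "matrix_inv A = B"
proof -
  have BA: "B ** A = mat 1" using assms matrix_left_right_inverse by blast
  have h: "A ** matrix_inv A = mat 1 \<and> matrix_inv A ** A = mat 1"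
    unfolding matrix_inv_def by (rule someI[of _ B]) (simp add: assms BA)
  have "matrix_inv A = matrix_inv A ** (A ** B)" using assms by simp
  also have "\<dots> = B" using h by (simp add: matrix_mul_assoc)
  finally show ?thesis .
qed

lemma minv_props: fixes A :: mat3 assumes "invertible A"
  shows "A ** matrix_inv A = mat 1" "matrix_inv A ** A = mat 1"
proof -
  obtain B where "A ** B = mat 1" using assms unfolding invertible_def by blast
  then show "A ** matrix_inv A = mat 1" "matrix_inv A ** A = mat 1"
    using minv_eq matrix_left_right_inverse by auto
qed

lemma inv_det: fixes A :: mat3 shows "invertible A \<longleftrightarrow> det A \<noteq> 0"
  by (rule invertible_det_nz)

lemma det_minv: fixes A :: mat3 assumes "invertible A" shows "det (matrix_inv A) * det A = 1"
  using minv_props(2)[OF assms] det_mul by (metis det_I)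

lemma mstar_mult: fixes A B :: mat3 assumes "invertible A" "invertible B"
  shows "mstar (A ** B) = mstar A ** mstar B"
proof -
  have "matrix_inv (A ** B) = matrix_inv B ** matrix_inv A"
    apply (rule minv_eq)
    using minv_props[OF assms(1)] minv_props[OF assms(2)]
    by (metis matrix_mul_assoc matrix_mul_rid)
  then show ?thesis by (simp add: mstar_def matrix_transpose_mul)
qed

lemma SO3_inv: fixes K :: mat3 assumes "K \<in> SO3" shows "matrix_inv K = transpose K" "invertible K"
proof -
  have "transpose K ** K = mat 1" using assms by (simp add: SO3_def)
  then have "K ** transpose K = mat 1" using matrix_left_right_inverse by blast
  then show "matrix_inv K = transpose K" by (rule minv_eq)
  show "invertible K" using assms by (simp add: SO3_def inv_det)
qed

lemma mstar_SO3: "K \<in> SO3 \<Longrightarrow> mstar K = K"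
  by (simp add: mstar_def SO3_inv)

lemma mstar_invertible: fixes A :: mat3 assumes "invertible A" shows "invertible (mstar A)"
  using det_minv[OF assms] by (simp add: mstar_def inv_det) (metis mult_zero_left zero_neq_one)

lemma mstar_mstar: fixes A :: mat3 assumes "invertible A" shows "mstar (mstar A) = A"
proof -
  have "transpose A ** transpose (matrix_inv A) = mat 1"
    using minv_props(2)[OF assms] by (metis matrix_transpose_mul transpose_mat)
  then have "matrix_inv (transpose (matrix_inv A)) = transpose A"
    using minv_eq matrix_left_right_inverse by blast
  then show ?thesis by (simp add: mstar_def)
qed

lemma act_cls: "act g (cls M) = cls (g ** M)"
  by (simp add: act_def cls_def image_image matrix_mul_assoc)

lemma act_act: "act a (act b P) = act (a ** b) P"
  by (simp add: act_def image_image matrix_mul_assoc)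

lemma act_one: "act (mat 1) P = P"
  by (simp add: act_def)

lemma inv_at_cls: assumes "invertible M"
  shows "inv_at B (cls M) = cls (B ** transpose B ** mstar M)"
  unfolding inv_at_def cls_def image_image
proof (rule image_cong[OF refl])
  fix K assume K: "K \<in> SO3"
  show "B ** transpose B ** mstar (M ** K) = B ** transpose B ** mstar M ** K"
    by (simp add: mstar_mult[OF assms SO3_inv(2)[OF K]] mstar_SO3[OF K] matrix_mul_assoc)
qed

lemma Q_sym: fixes B :: mat3 assumes "invertible B"
  defines "Q \<equiv> B ** transpose B"
  shows "invertible Q" "transpose (matrix_inv Q) = matrix_inv Q" "mstar Q = matrix_inv Q"
proof -
  show iq: "invertible Q" using assms by (simp add: inv_det det_mul Q_def)
  have tq: "transpose Q = Q" by (simp add: Q_def matrix_transpose_mul)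
  have "Q ** transpose (matrix_inv Q) = mat 1"
    using minv_props(2)[OF iq] by (metis matrix_transpose_mul transpose_mat tq)
  then show "transpose (matrix_inv Q) = matrix_inv Q" using minv_eq by metis
  then show "mstar Q = matrix_inv Q" by (simp add: mstar_def)
qed

lemma F_cls: fixes B R M :: mat3
  assumes "invertible B" "R \<in> SO3" "invertible M"
  defines "Q \<equiv> B ** transpose B"
  shows "(act R \<circ> inv_at B \<circ> act R \<circ> inv_at B) (cls M) = cls (R ** Q ** R ** matrix_inv Q ** M)"
proof -
  have iQ: "invertible Q" and mQ: "mstar Q = matrix_inv Q" using Q_sym[OF assms(1)] by (simp_all add: Q_def)
  have iR: "invertible R" using SO3_inv assms by blast
  have iQM: "invertible (Q ** mstar M)" using iQ mstar_invertible[OF assms(3)]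
    by (simp add: inv_det det_mul)
  have iRQM: "invertible (R ** (Q ** mstar M))" using iR iQM by (simp add: inv_det det_mul)
  have "mstar (R ** (Q ** mstar M)) = R ** (matrix_inv Q ** M)"
    by (simp add: mstar_mult[OF iR iQM] mstar_mult[OF iQ mstar_invertible[OF assms(3)]]
        mstar_SO3[OF assms(2)] mQ mstar_mstar[OF assms(3)])
  then have e: "Q ** mstar (R ** (Q ** mstar M)) = Q ** R ** matrix_inv Q ** M"
    by (simp add: matrix_mul_assoc)
  have "(act R \<circ> inv_at B \<circ> act R \<circ> inv_at B) (cls M) = act R (inv_at B (cls (R ** (Q ** mstar M))))"
    by (simp add: inv_at_cls[OF assms(3)] act_cls Q_def)
  also have "\<dots> = act R (cls (Q ** mstar (R ** (Q ** mstar M))))"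
    by (subst inv_at_cls[OF iRQM]) (simp add: Q_def)
  also have "\<dots> = cls (R ** Q ** R ** matrix_inv Q ** M)"
    by (simp only: e act_cls) (simp only: matrix_mul_assoc)
  finally show ?thesis .
qed

lemma SO3_M3: "M3 a b c d e f g h i \<in> SO3 \<longleftrightarrow>
  a*a + d*d + g*g = 1 \<and> a*b + d*e + g*h = 0 \<and> a*c + d*f + g*i = 0 \<and>
  b*a + e*d + h*g = 0 \<and> b*b + e*e + h*h = 1 \<and> b*c + e*f + h*i = 0 \<and>
  c*a + f*d + i*g = 0 \<and> c*b + f*e + i*h = 0 \<and> c*c + f*f + i*i = 1 \<and>
  a*e*i + b*f*g + c*d*h - a*f*h - b*d*i - c*e*g = 1"
  by (simp add: SO3_def M3_transpose M3_mult M3_one M3_inj M3_det)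

lemma conj_SO3_id: fixes K :: mat3 assumes A: "\<forall>M\<in>SL3. matrix_inv M ** K ** M \<in> SO3" shows "K = mat 1"
proof -
  obtain a b c d e f g h i where K: "K = M3 a b c d e f g h i" using mat3_M3 by blast
  have T: "matrix_inv M ** K ** M \<in> SO3" if "M ** N = mat 1" "det M = 1" for M N
  proof -
    have "M \<in> SL3" using that by (simp add: SL3_def)
    then show ?thesis using A by blast
  qed
  have m1: "matrix_inv (mat 1) ** K ** mat 1 \<in> SO3" by (rule T[of _ "mat 1"]) simp_all
  have "matrix_inv (mat 1) = (mat 1 :: mat3)" by (rule minv_eq) simp
  with m1 have "K \<in> SO3" by simp
  then have k: "a*a + d*d + g*g = 1" "a*b + d*e + g*h = 0" "a*c + d*f + g*i = 0"
    "b*b + e*e + h*h = 1" "b*c + e*f + h*i = 0" "c*c + f*f + i*i = 1"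
    "a*e*i + b*f*g + c*d*h - a*f*h - b*d*i - c*e*g = 1"
    unfolding K SO3_M3 by simp_all
  have iD: "matrix_inv (M3 2 0 0 0 1 0 0 0 (1/2)) = M3 (1/2) 0 0 0 1 0 0 0 2"
    by (rule minv_eq) (simp add: M3_mult M3_one)
  have "matrix_inv (M3 2 0 0 0 1 0 0 0 (1/2)) ** K ** M3 2 0 0 0 1 0 0 0 (1/2) \<in> SO3"
    by (rule T[of _ "M3 (1/2) 0 0 0 1 0 0 0 2"]) (simp_all add: M3_mult M3_one M3_det)
  then have "M3 a (b/2) (c/4) (d*2) e (f/2) (4*g) (2*h) i \<in> SO3"
    unfolding iD K M3_mult by simp
  then have kD: "a*a + (2*d)*(2*d) + (4*g)*(4*g) = 1" "(b/2)*(b/2) + e*e + (2*h)*(2*h) = 1"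
     "(c/4)*(c/4) + (f/2)*(f/2) + i*i = 1"
    unfolding SO3_M3 by simp_all
  have kD1: "a*a + 4*(d*d) + 16*(g*g) = 1" using kD(1) by algebra
  have kD3: "(c*c)/16 + (f*f)/4 + i*i = 1" using kD(3) by (simp add: field_simps)
  have sq: "x*x \<ge> 0" for x :: real by simp
  have "d*d = 0 \<and> g*g = 0" using k(1) kD1 sq[of d] sq[of g] by linarith
  then have dg: "d = 0" "g = 0" by simp_all
  have "c*c = 0 \<and> f*f = 0" using k(6) kD3 sq[of c] sq[of f] by linarith
  then have cf: "c = 0" "f = 0" by simp_all
  have aa: "a*a = 1" using k(1) dg by simp
  have "b = 0" using k(2) dg aa by auto
  have kD2: "e*e + 4*(h*h) = 1" using kD(2) `b = 0` by (simp add: field_simps)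
  have "e*e + h*h = 1" using k(4) `b = 0` by simp
  then have "h * h = 0" using kD2 by linarith
  then have "h = 0" by simp
  have ee: "e*e = 1" using k(4) `b = 0` `h = 0` by simp
  have K': "K = M3 a 0 0 0 e 0 0 0 i" using K dg cf `b = 0` `h = 0` by simp
  have iS1: "matrix_inv (M3 1 1 0 0 1 0 0 0 1) = M3 1 (-1) 0 0 1 0 0 0 1"
    by (rule minv_eq) (simp add: M3_mult M3_one)
  have "matrix_inv (M3 1 1 0 0 1 0 0 0 1) ** K ** M3 1 1 0 0 1 0 0 0 1 \<in> SO3"
    by (rule T[of _ "M3 1 (-1) 0 0 1 0 0 0 1"]) (simp_all add: M3_mult M3_one M3_det)
  then have ae: "a = e"
    unfolding iS1 K' M3_mult SO3_M3 using aa by auto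
  have iS2: "matrix_inv (M3 1 0 0 0 1 1 0 0 1) = M3 1 0 0 0 1 (-1) 0 0 1"
    by (rule minv_eq) (simp add: M3_mult M3_one)
  have "matrix_inv (M3 1 0 0 0 1 1 0 0 1) ** K ** M3 1 0 0 0 1 1 0 0 1 \<in> SO3"
    by (rule T[of _ "M3 1 0 0 0 1 (-1) 0 0 1"]) (simp_all add: M3_mult M3_one M3_det)
  then have ei: "e = i"
    unfolding iS2 K' M3_mult SO3_M3 using ee by auto
  have "a*a*a = 1" using k(7) K' ae ei dg cf `b = 0` `h = 0` by simp
  then have "a = 1" using aa by (metis mult_1_left mult.commute)
  then show ?thesis using K' ae ei by (simp add: M3_one)
qed

lemma one_SO3: "mat 1 \<in> SO3" by (simp add: SO3_def)

lemma SL3_inv: "g \<in> SL3 \<Longrightarrow> invertible g" by (simp add: SL3_def inv_det)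

lemma act_unique: assumes g: "g \<in> SL3" and g': "g' \<in> SL3" and A: "\<forall>P\<in>Xpts. act g P = act g' P"
  shows "g = g'"
proof -
  define K where "K = matrix_inv g ** g'"
  have ig: "invertible g" using g SL3_inv by blast
  have "\<forall>M\<in>SL3. matrix_inv M ** K ** M \<in> SO3"
  proof
    fix M assume M: "M \<in> SL3"
    have iM: "invertible M" using M SL3_inv by blast
    have "cls M \<in> Xpts" using M by (simp add: Xpts_def)
    then have "act g (cls M) = act g' (cls M)" using A by blast
    then have "cls (g ** M) = cls (g' ** M)" by (simp add: act_cls)
    moreover have "g' ** M \<in> cls (g' ** M)" unfolding cls_def using one_SO3
      by (metis image_eqI matrix_mul_rid)
    ultimately obtain K0 where K0: "K0 \<in> SO3" "g' ** M = g ** M ** K0" unfolding cls_def by auto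
    have "matrix_inv M ** K ** M = matrix_inv M ** matrix_inv g ** (g' ** M)"
      by (simp add: K_def matrix_mul_assoc)
    also have "\<dots> = (matrix_inv M ** (matrix_inv g ** g) ** M) ** K0"
      by (simp add: K0 matrix_mul_assoc)
    also have "\<dots> = K0" using minv_props[OF ig] minv_props[OF iM] by simp
    finally show "matrix_inv M ** K ** M \<in> SO3" using K0 by simp
  qed
  then have "K = mat 1" by (rule conj_SO3_id)
  then have "g ** K = g" by simp
  moreover have "g ** K = g'" using minv_props[OF ig] by (simp add: K_def matrix_mul_assoc)
  ultimately show ?thesis by simp
qed

lemma iso_eq: assumes "g \<in> SL3" "\<forall>P\<in>Xpts. F P = act g P" shows "iso_matrix F = g"
  unfolding iso_matrix_def
proof (rule the_equality)
  show "g \<in> SL3 \<and> (\<forall>P\<in>Xpts. F P = act g P)" using assms by blast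
next
  fix x assume "x \<in> SL3 \<and> (\<forall>P\<in>Xpts. F P = act x P)"
  then have x: "x \<in> SL3" "\<forall>P\<in>Xpts. act x P = act g P" using assms(2) by auto
  show "x = g" by (rule act_unique[OF x(1) assms(1) x(2)])
qed

lemma minv_SL3: assumes "g \<in> SL3" shows "matrix_inv g \<in> SL3"
  using det_minv[OF SL3_inv[OF assms]] assms by (simp add: SL3_def)

lemma iso_inv: assumes g: "g \<in> SL3" and A: "\<forall>P\<in>Xpts. F P = act g P"
  shows "iso_matrix (inv_into Xpts F) = matrix_inv g"
proof (rule iso_eq[OF minv_SL3[OF g]], rule ballI)
  fix P assume P: "P \<in> Xpts"
  have ig: "invertible g" using g SL3_inv by blast
  have inj: "inj_on F Xpts"
  proof (rule inj_onI)
    fix x y assume "x \<in> Xpts" "y \<in> Xpts" "F x = F y"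
    then have "act g x = act g y" using A by simp
    then have "act (matrix_inv g) (act g x) = act (matrix_inv g) (act g y)" by simp
    then show "x = y" using minv_props[OF ig] by (simp add: act_act act_one)
  qed
  obtain M where M: "M \<in> SL3" "P = cls M" using P by (auto simp: Xpts_def)
  have x: "act (matrix_inv g) P \<in> Xpts" using M minv_SL3[OF g]
    by (simp add: act_cls Xpts_def SL3_def det_mul)
  have "F (act (matrix_inv g) P) = P" using A x minv_props[OF ig] by (simp add: act_act act_one)
  then show "inv_into Xpts F P = act (matrix_inv g) P" by (rule inv_into_f_eq[OF inj x])
qed

lemma mm_scaleR_right: "(A::mat3) ** (c *\<^sub>R B) = c *\<^sub>R (A ** B)"
  unfolding matrix_matrix_mult_def by (simp add: vec_eq_iff sum_distrib_left mult.left_commute)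

lemma mm_scaleR_left: "(c *\<^sub>R (A::mat3)) ** B = c *\<^sub>R (A ** B)"
  unfolding matrix_matrix_mult_def by (simp add: vec_eq_iff sum_distrib_left mult.assoc)

lemma mm_add_rdistrib: "((A::mat3) + B) ** C = A ** C + B ** C"
  unfolding matrix_matrix_mult_def by (simp add: vec_eq_iff sum.distrib distrib_right)

lemma conj_bl: fixes P P' :: mat3 shows "bounded_linear (\<lambda>X::mat3. P ** X ** P')"
proof -
  have "linear (\<lambda>X::mat3. P ** X ** P')"
    by (rule linearI) (simp_all add: matrix_add_ldistrib mm_add_rdistrib mm_scaleR_right mm_scaleR_left)
  then show ?thesis using linear_conv_bounded_linear by blast
qed

lemma matpow_conj: fixes P P' A :: mat3 assumes "P ** P' = mat 1" "P' ** P = mat 1"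
  shows "matpow (P ** A ** P') n = P ** matpow A n ** P'"
proof (induction n)
  case 0 then show ?case using assms by simp
next
  case (Suc n)
  have "P ** A ** P' ** (P ** matpow A n ** P') = P ** A ** (P' ** P) ** matpow A n ** P'"
    by (simp add: matrix_mul_assoc)
  then show ?case using Suc assms by (simp add: matrix_mul_assoc)
qed

lemma matpow_diag: "matpow (M3 a 0 0 0 b 0 0 0 c) n = M3 (a^n) 0 0 0 (b^n) 0 0 0 (c^n)"
  by (induction n) (simp_all add: M3_one M3_mult)

lemma M3_lin: "M3 x1 x2 x3 x4 x5 x6 x7 x8 x9 =
  x1 *\<^sub>R M3 1 0 0 0 0 0 0 0 0 + x2 *\<^sub>R M3 0 1 0 0 0 0 0 0 0 + x3 *\<^sub>R M3 0 0 1 0 0 0 0 0 0 +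
  x4 *\<^sub>R M3 0 0 0 1 0 0 0 0 0 + x5 *\<^sub>R M3 0 0 0 0 1 0 0 0 0 + x6 *\<^sub>R M3 0 0 0 0 0 1 0 0 0 +
  x7 *\<^sub>R M3 0 0 0 0 0 0 1 0 0 + x8 *\<^sub>R M3 0 0 0 0 0 0 0 1 0 + x9 *\<^sub>R M3 0 0 0 0 0 0 0 0 1"
  by (simp add: M3_scale M3_add)

lemma M3_sums:
  assumes "u1 sums a1" "u2 sums a2" "u3 sums a3" "u4 sums a4" "u5 sums a5" "u6 sums a6"
    "u7 sums a7" "u8 sums a8" "u9 sums a9"
  shows "(\<lambda>n. M3 (u1 n) (u2 n) (u3 n) (u4 n) (u5 n) (u6 n) (u7 n) (u8 n) (u9 n)) sums
     M3 a1 a2 a3 a4 a5 a6 a7 a8 a9"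
proof -
  have e: "\<And>n. M3 (u1 n) (u2 n) (u3 n) (u4 n) (u5 n) (u6 n) (u7 n) (u8 n) (u9 n) =
  u1 n *\<^sub>R M3 1 0 0 0 0 0 0 0 0 + u2 n *\<^sub>R M3 0 1 0 0 0 0 0 0 0 + u3 n *\<^sub>R M3 0 0 1 0 0 0 0 0 0 +
  u4 n *\<^sub>R M3 0 0 0 1 0 0 0 0 0 + u5 n *\<^sub>R M3 0 0 0 0 1 0 0 0 0 + u6 n *\<^sub>R M3 0 0 0 0 0 1 0 0 0 +
  u7 n *\<^sub>R M3 0 0 0 0 0 0 1 0 0 + u8 n *\<^sub>R M3 0 0 0 0 0 0 0 1 0 + u9 n *\<^sub>R M3 0 0 0 0 0 0 0 0 1"
    by (rule M3_lin)
  show ?thesis unfolding e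
    by (subst M3_lin) (intro sums_add sums_scaleR_left assms)
qed

lemma mexp_conj_diag: fixes P P' :: mat3 assumes "P ** P' = mat 1" "P' ** P = mat 1"
  shows "mexp (P ** M3 a 0 0 0 b 0 0 0 c ** P') = P ** M3 (exp a) 0 0 0 (exp b) 0 0 0 (exp c) ** P'"
proof -
  have e: "(\<lambda>n. x ^ n / fact n) sums exp x" for x :: real
    using exp_converges[of x] by (simp add: divide_inverse mult.commute)
  have s: "(\<lambda>n. (1 / fact n) *\<^sub>R matpow (M3 a 0 0 0 b 0 0 0 c) n) sums M3 (exp a) 0 0 0 (exp b) 0 0 0 (exp c)"
    unfolding matpow_diag M3_scale
    by (rule M3_sums) (simp_all add: e)
  have "(\<lambda>n. P ** ((1 / fact n) *\<^sub>R matpow (M3 a 0 0 0 b 0 0 0 c) n) ** P') sums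
        (P ** M3 (exp a) 0 0 0 (exp b) 0 0 0 (exp c) ** P')"
    by (rule bounded_linear.sums[OF conj_bl s])
  then have "(\<lambda>n. (1 / fact n) *\<^sub>R matpow (P ** M3 a 0 0 0 b 0 0 0 c ** P') n) sums
        (P ** M3 (exp a) 0 0 0 (exp b) 0 0 0 (exp c) ** P')"
    by (simp add: matpow_conj[OF assms] mm_scaleR_right mm_scaleR_left)
  then show ?thesis unfolding mexp_def by (rule sums_unique[symmetric])
qed

lemma trace_poly:
  fixes C H c w x y k m :: real
  assumes h1: "C * C - H * H = 1" and h2: "c * c + w * w = 1" and h3: "x * y = 1" and h4: "4 * k * k = 3" and h5: "2 * m = -1"
  shows "64 * trace (M3 1 0 0 0 m (- k) 0 k m  ** 
          (M3 1 0 0 0 x 0 0 0 y  **  (M3 1 0 0 0 c (-w) 0 w c  **  M3 C H 0 H C 0 0 0 1  **  M3 1 0 0 0 c w 0 (-w) c)  **  M3 1 0 0 0 x 0 0 0 y)  ** 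
          M3 1 0 0 0 m (- k) 0 k m  ** 
          (M3 1 0 0 0 y 0 0 0 x  **  (M3 1 0 0 0 c (-w) 0 w c  **  M3 C (-H) 0 (-H) C 0 0 0 1  **  M3 1 0 0 0 c w 0 (-w) c)  **  M3 1 0 0 0 y 0 0 0 x))
   = - 48 * C * (x^4 + y^4) + 144 * C^2 - 48 - 48 * (w * c)^2 * (C - 1)^2 * (x^2 - y^2)^2"
  unfolding M3_mult M3_trace
  using assms by algebra

lemma p0_M3: "p0 = M3 2 0 0 0 (-1) 0 0 0 (-1)" by (simp add: p0_def M3_def)
lemma p1_M3: "p1 = M3 0 0 0 0 (1/2) 0 0 0 (-1/2)" by (simp add: p1_def M3_def)
lemma f1_M3: "f1 = M3 0 1 0 1 0 0 0 0 0" by (simp add: f1_def M3_def)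

lemma exp1_arg: "r *\<^sub>R p0 + t *\<^sub>R (Rot (\<beta>/2) ** p1 ** Rot (-\<beta>/2)) =
   Rot (\<beta>/2) ** M3 (2*r) 0 0 0 (-r + t/2) 0 0 0 (-r - t/2) ** Rot (-(\<beta>/2))"
proof -
  have e: "-\<beta>/2 = -(\<beta>/2)" by simp
  have sc: "(sin (\<beta>/2))^2 + (cos (\<beta>/2))^2 = 1" by (rule sin_cos_squared_add)
  show ?thesis
    unfolding e p0_M3 p1_M3 Rot_M3 M3_mult M3_scale M3_add M3_inj cos_minus sin_minus
    using sc by algebra
qed

lemma mexp1: "mexp (r *\<^sub>R p0 + t *\<^sub>R (Rot (\<beta>/2) ** p1 ** Rot (-\<beta>/2))) =
   Rot (\<beta>/2) ** M3 (exp (2*r)) 0 0 0 (exp (-r + t/2)) 0 0 0 (exp (-r - t/2)) ** Rot (-(\<beta>/2))"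
  unfolding exp1_arg by (rule mexp_conj_diag) (simp_all add: Rot_inv)

definition hh :: real where "hh = sqrt 2 / 2"
lemma hh2: "hh * hh = 1/2" by (simp add: hh_def)

definition UU :: mat3 where "UU = M3 hh hh 0 hh (-hh) 0 0 0 1"
lemma UU2: "UU ** UU = mat 1"
  unfolding UU_def M3_mult M3_one M3_inj using hh2 by algebra

lemma f1_diag: "s *\<^sub>R f1 = UU ** M3 s 0 0 0 (-s) 0 0 0 0 ** UU"
  unfolding f1_M3 UU_def M3_mult M3_scale M3_inj
  using hh2 by algebra

lemma S_M3: "UU ** M3 (exp s) 0 0 0 (exp (-s)) 0 0 0 (exp 0) ** UU =
    M3 (cosh s) (sinh s) 0 (sinh s) (cosh s) 0 0 0 1"
proof -
  have d: "(x::real) /\<^sub>R 2 = x / 2" for x by simp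
  show ?thesis
    unfolding UU_def M3_mult M3_inj cosh_def sinh_def d exp_zero
    using hh2 by algebra
qed

lemma mexp2: "mexp (s *\<^sub>R (Rot \<alpha> ** f1 ** Rot (-\<alpha>))) =
   Rot \<alpha> ** M3 (cosh s) (sinh s) 0 (sinh s) (cosh s) 0 0 0 1 ** Rot (-\<alpha>)"
proof -
  have "s *\<^sub>R (Rot \<alpha> ** f1 ** Rot (-\<alpha>)) = (Rot \<alpha> ** UU) ** M3 s 0 0 0 (-s) 0 0 0 0 ** (UU ** Rot (-\<alpha>))"
  proof -
    have "s *\<^sub>R (Rot \<alpha> ** f1 ** Rot (-\<alpha>)) = Rot \<alpha> ** (s *\<^sub>R f1) ** Rot (-\<alpha>)"
      by (simp add: mm_scaleR_left mm_scaleR_right)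
    also have "\<dots> = (Rot \<alpha> ** UU) ** M3 s 0 0 0 (-s) 0 0 0 0 ** (UU ** Rot (-\<alpha>))"
      unfolding f1_diag by (simp add: matrix_mul_assoc)
    finally show ?thesis .
  qed
  moreover have "(Rot \<alpha> ** UU) ** (UU ** Rot (-\<alpha>)) = mat 1"
    by (metis UU2 matrix_mul_assoc matrix_mul_rid Rot_inv(2))
  moreover have "(UU ** Rot (-\<alpha>)) ** (Rot \<alpha> ** UU) = mat 1"
    by (metis UU2 matrix_mul_assoc matrix_mul_rid Rot_inv(1))
  ultimately have "mexp (s *\<^sub>R (Rot \<alpha> ** f1 ** Rot (-\<alpha>))) =
     (Rot \<alpha> ** UU) ** M3 (exp s) 0 0 0 (exp (-s)) 0 0 0 (exp 0) ** (UU ** Rot (-\<alpha>))"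
    using mexp_conj_diag by presburger
  also have "\<dots> = Rot \<alpha> ** (UU ** M3 (exp s) 0 0 0 (exp (-s)) 0 0 0 (exp 0) ** UU) ** Rot (-\<alpha>)"
    by (simp add: matrix_mul_assoc)
  finally show ?thesis unfolding S_M3 .
qed

lemma R_M3: "Rot (2*pi/3) = M3 1 0 0 0 (-1/2) (- (sqrt 3/2)) 0 (sqrt 3/2) (-1/2)"
proof -
  have s: "sin (2*pi/3) = sqrt 3/2" using sin_120' by (simp add: mult.commute)
  show ?thesis unfolding Rot_M3 cos_120 s by simp
qed

lemma sandwich: fixes P P' X Y :: mat3
  assumes "P ** P' = mat 1" "P' ** P = mat 1" "X ** Y = mat 1"
  shows "(P ** X ** P') ** (P ** Y ** P') = mat 1"
proof -
  have "(P ** X ** P') ** (P ** Y ** P') = P ** X ** (P' ** P) ** Y ** P'" by (simp add: matrix_mul_assoc)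
  also have "\<dots> = P ** (X ** Y) ** P'" using assms(2) by (simp add: matrix_mul_assoc)
  finally show ?thesis using assms(1,3) by simp
qed

lemma sandwich2: fixes A A' X Y :: mat3
  assumes "A ** A' = mat 1" "A' ** A = mat 1" "X ** Y = mat 1"
  shows "(A ** X ** A) ** (A' ** Y ** A') = mat 1"
proof -
  have "(A ** X ** A) ** (A' ** Y ** A') = A ** X ** (A ** A') ** Y ** A'" by (simp add: matrix_mul_assoc)
  also have "\<dots> = A ** (X ** Y) ** A'" using assms(1) by (simp add: matrix_mul_assoc)
  finally show ?thesis using assms(1,3) by simp
qed

lemma trace_transpose: "trace (transpose (A::mat3)) = trace A"
  by (simp add: trace_def transpose_def)

lemma tr_red: fixes R Rt Rtm Dr Dri X Y :: mat3
  assumes a1: "Rtm ** R ** Rt = R" and a4: "Dr ** R ** Dri = R" and a5: "Dri ** R ** Dr = R"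
  shows "trace (R ** (Rt ** (Dr ** X ** Dr) ** Rtm) ** R ** (Rt ** (Dri ** Y ** Dri) ** Rtm)) = trace (R ** X ** R ** Y)"
proof -
  have "R ** (Rt ** (Dr ** X ** Dr) ** Rtm) ** R ** (Rt ** (Dri ** Y ** Dri) ** Rtm)
      = (R ** Rt) ** (Dr ** X ** (Dr ** (Rtm ** R ** Rt) ** Dri) ** Y ** Dri) ** Rtm"
    by (simp add: matrix_mul_assoc)
  also have "\<dots> = (R ** Rt) ** (Dr ** X ** R ** Y ** Dri) ** Rtm"
    using a1 a4 by (simp add: matrix_mul_assoc)
  finally have e1: "R ** (Rt ** (Dr ** X ** Dr) ** Rtm) ** R ** (Rt ** (Dri ** Y ** Dri) ** Rtm)
      = (R ** Rt) ** (Dr ** X ** R ** Y ** Dri) ** Rtm" .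
  have "trace ((R ** Rt) ** (Dr ** X ** R ** Y ** Dri) ** Rtm) = trace (Rtm ** ((R ** Rt) ** (Dr ** X ** R ** Y ** Dri)))"
    by (rule trace_mul_sym)
  also have "\<dots> = trace ((Rtm ** R ** Rt) ** (Dr ** X ** R ** Y ** Dri))" by (simp add: matrix_mul_assoc)
  also have "\<dots> = trace (R ** (Dr ** X ** R ** Y ** Dri))" using a1 by simp
  also have "\<dots> = trace ((R ** Dr ** X ** R ** Y) ** Dri)" by (simp add: matrix_mul_assoc)
  also have "\<dots> = trace (Dri ** (R ** Dr ** X ** R ** Y))" by (rule trace_mul_sym)
  also have "\<dots> = trace ((Dri ** R ** Dr) ** X ** R ** Y)" by (simp add: matrix_mul_assoc)
  also have "\<dots> = trace (R ** X ** R ** Y)" using a5 by simp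
  finally show ?thesis using e1 by simp
qed

lemma Dr_Rot: "M3 (exp (2*r)) 0 0 0 (exp (-r)) 0 0 0 (exp (-r)) ** Rot th ** M3 (exp (-(2*r))) 0 0 0 (exp r) 0 0 0 (exp r) = Rot th"
  "M3 (exp (-(2*r))) 0 0 0 (exp r) 0 0 0 (exp r) ** Rot th ** M3 (exp (2*r)) 0 0 0 (exp (-r)) 0 0 0 (exp (-r)) = Rot th"
proof -
  have e: "exp r * exp (-r) = 1" "exp (2*r) * exp (-(2*r)) = 1" by (simp_all add: exp_minus_inverse)
  show "M3 (exp (2*r)) 0 0 0 (exp (-r)) 0 0 0 (exp (-r)) ** Rot th ** M3 (exp (-(2*r))) 0 0 0 (exp r) 0 0 0 (exp r) = Rot th"
    unfolding Rot_M3 M3_mult M3_inj using e by algebra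
  show "M3 (exp (-(2*r))) 0 0 0 (exp r) 0 0 0 (exp r) ** Rot th ** M3 (exp (2*r)) 0 0 0 (exp (-r)) 0 0 0 (exp (-r)) = Rot th"
    unfolding Rot_M3 M3_mult M3_inj using e by algebra
qed

theorem proposition4p5:
  fixes r s t \<alpha> \<beta> :: real
  assumes "s \<ge> 0" and "t \<ge> 0"
  defines "F \<equiv> rho_b \<circ> rho_a r s t \<alpha> \<beta> \<circ> rho_b \<circ> rho_a r s t \<alpha> \<beta>"
      and "\<theta> \<equiv> 2 * \<alpha> - \<beta>"
  shows "trace (iso_matrix F) = trace (iso_matrix (inv_into Xpts F))
       \<and> trace (iso_matrix F) =
           - (3/2) * cosh (2 * s) * cosh (2 * t) + (9/4) * (cosh (2 * s))^2 - 3/4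
           - 3 * (sin \<theta>)^2 * (sinh s)^4 * (sinh t)^2"
proof -
  define Rt where "Rt = Rot (\<beta>/2)"
  define Rtm where "Rtm = Rot (-(\<beta>/2))"
  define Ra where "Ra = Rot \<alpha>"
  define Ram where "Ram = Rot (-\<alpha>)"
  define D1 where "D1 = M3 (exp (2*r)) 0 0 0 (exp (-r + t/2)) 0 0 0 (exp (-r - t/2))"
  define D1i where "D1i = M3 (exp (-(2*r))) 0 0 0 (exp (r - t/2)) 0 0 0 (exp (r + t/2))"
  define Dr where "Dr = M3 (exp (2*r)) 0 0 0 (exp (-r)) 0 0 0 (exp (-r))"
  define Dri where "Dri = M3 (exp (-(2*r))) 0 0 0 (exp r) 0 0 0 (exp r)"
  define x where "x = exp (t/2)"
  define y where "y = exp (-(t/2))"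
  define Dt where "Dt = M3 1 0 0 0 x 0 0 0 y"
  define Dti where "Dti = M3 1 0 0 0 y 0 0 0 x"
  define S where "S = M3 (cosh s) (sinh s) 0 (sinh s) (cosh s) 0 0 0 1"
  define Si where "Si = M3 (cosh s) (- sinh s) 0 (- sinh s) (cosh s) 0 0 0 1"
  define \<phi> where "\<phi> = -(\<beta>/2) + \<alpha>"
  define W where "W = Rot \<phi>"
  define Wm where "Wm = Rot (-\<phi>)"
  define B where "B = Bmat r s t \<alpha> \<beta>"
  define R where "R = Rot (2*pi/3)"
  define Rm where "Rm = Rot (-(2*pi/3))"
  define Q where "Q = B ** transpose B"
  define N where "N = W ** (S ** S) ** Wm"
  define Ni where "Ni = W ** (Si ** Si) ** Wm"
  define Qi where "Qi = Rt ** (D1i ** Ni ** D1i) ** Rtm"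
  have B_eq: "B = Rt ** D1 ** Rtm ** (Ra ** S ** Ram)"
    unfolding B_def Bmat_def mexp1 mexp2 Rt_def Rtm_def D1_def S_def Ra_def Ram_def by (rule refl)
  have tB: "transpose B = Ra ** S ** Ram ** (Rt ** D1 ** Rtm)"
    by (simp add: B_eq matrix_transpose_mul Rot_transpose M3_transpose S_def D1_def Rt_def Rtm_def
        Ra_def Ram_def matrix_mul_assoc)
  have f1: "Rtm ** Ra = W" by (simp add: Rtm_def Ra_def W_def Rot_mult \<phi>_def)
  have f2: "Ram ** Ra = mat 1" by (simp add: Ram_def Ra_def Rot_inv)
  have f3: "Ram ** Rt = Wm"
  proof -
    have "-\<alpha> + \<beta>/2 = -\<phi>" by (simp add: \<phi>_def)
    then show ?thesis by (simp add: Ram_def Rt_def Wm_def Rot_mult)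
  qed
  have "Q = Rt ** D1 ** (Rtm ** Ra) ** S ** (Ram ** Ra) ** S ** (Ram ** Rt) ** D1 ** Rtm"
    unfolding Q_def tB unfolding B_eq by (simp add: matrix_mul_assoc)
  also have "\<dots> = Rt ** D1 ** W ** S ** S ** Wm ** D1 ** Rtm"
    by (simp only: f1 f2 f3 matrix_mul_rid)
  also have "\<dots> = Rt ** (D1 ** N ** D1) ** Rtm"
    by (simp add: N_def matrix_mul_assoc)
  finally have Q_eq: "Q = Rt ** (D1 ** N ** D1) ** Rtm" .
  have D1D1i: "D1 ** D1i = mat 1" "D1i ** D1 = mat 1"
    by (simp_all add: D1_def D1i_def M3_mult M3_one exp_add[symmetric])
  have SSi: "S ** Si = mat 1"
    using cosh_square_eq[of s] by (simp add: S_def Si_def M3_mult M3_one power2_eq_square algebra_simps)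
  have RtRtm: "Rt ** Rtm = mat 1" "Rtm ** Rt = mat 1" by (simp_all add: Rt_def Rtm_def Rot_inv)
  have WWm: "W ** Wm = mat 1" "Wm ** W = mat 1" by (simp_all add: W_def Wm_def Rot_inv)
  have SS: "(S ** S) ** (Si ** Si) = mat 1"
  proof -
    have "(S ** S) ** (Si ** Si) = S ** (S ** Si) ** Si" by (simp add: matrix_mul_assoc)
    then show ?thesis using SSi by simp
  qed
  have NNi: "N ** Ni = mat 1" unfolding N_def Ni_def by (rule sandwich[OF WWm SS])
  have QQi: "Q ** Qi = mat 1" unfolding Q_eq Qi_def
    by (rule sandwich[OF RtRtm sandwich2[OF D1D1i NNi]])
  have miQ: "matrix_inv Q = Qi" by (rule minv_eq[OF QQi])
  have dQ: "det Q * det Qi = 1" using QQi det_mul by (metis det_I)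
  have "det B \<noteq> 0"
  proof
    assume "det B = 0"
    then have "det Q = 0" by (simp add: Q_def det_mul)
    then show False using dQ by simp
  qed
  then have iB: "invertible B" by (simp add: inv_det)
  have iQ: "invertible Q" using Q_sym[OF iB] by (simp add: Q_def)
  define g where "g = R ** Q ** R ** matrix_inv Q"
  have RSO: "R \<in> SO3" by (simp add: R_def Rot_SO3)
  have detR: "det R = 1" using RSO by (simp add: SO3_def)
  have gSL: "g \<in> SL3"
    using dQ detR by (simp add: g_def SL3_def det_mul miQ)
  have F_eq: "F = act R \<circ> inv_at B \<circ> act R \<circ> inv_at B"
    by (simp add: F_def rho_a_def rho_b_def R_def B_def)
  have actF: "\<forall>P\<in>Xpts. F P = act g P"
  proof
    fix P assume "P \<in> Xpts"
    then obtain M where M: "M \<in> SL3" "P = cls M" by (auto simp: Xpts_def)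
    have "F P = cls (R ** Q ** R ** matrix_inv Q ** M)"
      unfolding F_eq M(2) Q_def by (rule F_cls[OF iB RSO SL3_inv[OF M(1)]])
    then show "F P = act g P" by (simp add: M(2) act_cls g_def)
  qed
  have iso1: "iso_matrix F = g" by (rule iso_eq[OF gSL actF])
  have iso2: "iso_matrix (inv_into Xpts F) = matrix_inv g" by (rule iso_inv[OF gSL actF])
  have RRm: "R ** Rm = mat 1" by (simp add: R_def Rm_def Rot_inv)
  have QiQ: "Qi ** Q = mat 1" using QQi matrix_left_right_inverse by blast
  have "g ** (Q ** Rm ** Qi ** Rm) = R ** Q ** (R ** (Qi ** Q) ** Rm) ** Qi ** Rm"
    by (simp add: g_def miQ matrix_mul_assoc)
  also have "\<dots> = R ** (Q ** Qi) ** Rm" using QiQ RRm by (simp add: matrix_mul_assoc)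
  also have "\<dots> = mat 1" using QQi RRm by simp
  finally have ginv: "matrix_inv g = Q ** Rm ** Qi ** Rm" by (rule minv_eq)
  have tQ: "transpose Q = Q" by (simp add: Q_def matrix_transpose_mul)
  have tQi: "transpose Qi = Qi" using Q_sym(2)[OF iB] miQ by (simp add: Q_def)
  have tRm: "transpose Rm = R" by (simp add: Rm_def R_def Rot_transpose)
  have T2: "trace (matrix_inv g) = trace (R ** Qi ** R ** Q)"
  proof -
    have "trace (matrix_inv g) = trace (transpose (Q ** Rm ** Qi ** Rm))" by (simp add: ginv trace_transpose)
    also have "\<dots> = trace (R ** Qi ** R ** Q)"
      by (simp add: matrix_transpose_mul tQ tQi tRm matrix_mul_assoc)
    finally show ?thesis .
  qed
  have T1: "trace g = trace (R ** Q ** R ** Qi)" by (simp add: g_def miQ)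
  have D1_split: "D1 ** N ** D1 = Dr ** (Dt ** N ** Dt) ** Dr"
  proof -
    have "D1 = Dr ** Dt" "D1 = Dt ** Dr"
      by (simp_all add: D1_def Dr_def Dt_def x_def y_def M3_mult exp_add[symmetric] algebra_simps)
    then show ?thesis by (metis matrix_mul_assoc)
  qed
  have D1i_split: "D1i ** Ni ** D1i = Dri ** (Dti ** Ni ** Dti) ** Dri"
  proof -
    have "D1i = Dri ** Dti" "D1i = Dti ** Dri"
      by (simp_all add: D1i_def Dri_def Dti_def x_def y_def M3_mult exp_add[symmetric] algebra_simps)
    then show ?thesis by (metis matrix_mul_assoc)
  qed
  have a1: "Rtm ** R ** Rt = R"
  proof -
    have "-(\<beta>/2) + 2*pi/3 + \<beta>/2 = 2*pi/3" by simp
    then show ?thesis by (simp add: Rtm_def R_def Rt_def Rot_mult)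
  qed
  have a4: "Dr ** R ** Dri = R" and a5: "Dri ** R ** Dr = R"
    unfolding Dr_def Dri_def R_def by (rule Dr_Rot(1), rule Dr_Rot(2))
  have T1': "trace g = trace (R ** (Dt ** N ** Dt) ** R ** (Dti ** Ni ** Dti))"
    unfolding T1 Q_eq Qi_def D1_split D1i_split by (rule tr_red[OF a1 a4 a5])
  have T2': "trace (matrix_inv g) = trace (R ** (Dti ** Ni ** Dti) ** R ** (Dt ** N ** Dt))"
    unfolding T2 Q_eq Qi_def D1_split D1i_split by (rule tr_red[OF a1 a5 a4])
  define C where "C = cosh (2 * s)"
  define H where "H = sinh (2 * s)"
  define c where "c = cos \<phi>"
  define w where "w = sin \<phi>"
  define k where "k = sqrt 3 / 2"
  define m where "m = - (1/2::real)"
  have R3: "R = M3 1 0 0 0 m (-k) 0 k m" by (simp add: R_def R_M3 m_def k_def)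
  have W3: "W = M3 1 0 0 0 c (-w) 0 w c" by (simp add: W_def Rot_M3 c_def w_def)
  have Wm3: "Wm = M3 1 0 0 0 c w 0 (-w) c" by (simp add: Wm_def Rot_M3 c_def w_def)
  have SS3: "S ** S = M3 C H 0 H C 0 0 0 1"
    unfolding S_def C_def H_def cosh_double sinh_double by (simp add: M3_mult power2_eq_square algebra_simps)
  have SiSi3: "Si ** Si = M3 C (-H) 0 (-H) C 0 0 0 1"
    unfolding Si_def C_def H_def cosh_double sinh_double by (simp add: M3_mult power2_eq_square algebra_simps)
  have h1: "C*C - H*H = 1" using cosh_square_eq[of "2 * s"] by (simp add: C_def H_def power2_eq_square)
  have h2: "c*c + w*w = 1" using sin_cos_squared_add[of \<phi>] by (simp add: c_def w_def power2_eq_square)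
  have h3: "x*y = 1" by (simp add: x_def y_def exp_add[symmetric])
  have h4: "4*k*k = 3" by (simp add: k_def)
  have h5: "2*m = -1" by (simp add: m_def)
  have h1': "C*C - (-H)*(-H) = 1" using h1 by simp
  have h3': "y*x = 1" using h3 by (simp add: mult.commute)
  note P1 = trace_poly[OF h1 h2 h3 h4 h5]
  note P2 = trace_poly[OF h1' h2 h3' h4 h5, unfolded minus_minus]
  have e1: "64 * trace g = - 48 * C * (x^4 + y^4) + 144 * C^2 - 48 - 48 * (w * c)^2 * (C - 1)^2 * (x^2 - y^2)^2"
    unfolding T1' N_def Ni_def SS3 SiSi3 R3 W3 Wm3 Dt_def Dti_def by (rule P1)
  have e2: "64 * trace (matrix_inv g) = - 48 * C * (y^4 + x^4) + 144 * C^2 - 48 - 48 * (w * c)^2 * (C - 1)^2 * (y^2 - x^2)^2"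
    unfolding T2' N_def Ni_def SS3 SiSi3 R3 W3 Wm3 Dt_def Dti_def by (rule P2)
  have x2: "x^2 = exp t" by (simp add: x_def power2_eq_square exp_add[symmetric])
  have y2: "y^2 = exp (-t)" by (simp add: y_def power2_eq_square exp_add[symmetric])
  have x4: "x^4 = exp (2*t)"
  proof -
    have "x^4 = (x^2)^2" by simp
    also have "\<dots> = exp (2*t)" unfolding x2 by (simp add: power2_eq_square exp_add[symmetric])
    finally show ?thesis .
  qed
  have y4: "y^4 = exp (-(2*t))"
  proof -
    have "y^4 = (y^2)^2" by simp
    also have "\<dots> = exp (-(2*t))" unfolding y2 by (simp add: power2_eq_square exp_add[symmetric])
    finally show ?thesis .
  qed
  have ct: "cosh (2*t) = (x^4 + y^4)/2" by (simp add: x4 y4 cosh_def)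
  have st: "sinh t = (x^2 - y^2)/2" by (simp add: x2 y2 sinh_def)
  have ss: "(sinh s)^2 = (C - 1)/2" using cosh_square_eq[of s] by (simp add: C_def cosh_double)
  have s4: "(sinh s)^4 = ((C - 1)/2)^2"
  proof -
    have "(sinh s)^4 = ((sinh s)^2)^2" by simp
    then show ?thesis by (simp add: ss)
  qed
  have sth: "sin \<theta> = 2 * w * c"
  proof -
    have "\<theta> = 2 * \<phi>" by (simp add: \<theta>_def \<phi>_def)
    then show ?thesis by (simp add: sin_double w_def c_def)
  qed
  have tg: "trace g = - (3/2) * C * cosh (2 * t) + (9/4) * C^2 - 3/4
           - 3 * (sin \<theta>)^2 * (sinh s)^4 * (sinh t)^2"
  proof -
    have tg0: "trace g = (- 48 * C * (x^4 + y^4) + 144 * C^2 - 48 - 48 * (w * c)^2 * (C - 1)^2 * (x^2 - y^2)^2) / 64"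
      using e1 by simp
    show ?thesis unfolding ct st s4 sth tg0 by (simp add: field_simps power2_eq_square)
  qed
  have "- 48 * C * (y^4 + x^4) + 144 * C^2 - 48 - 48 * (w * c)^2 * (C - 1)^2 * (y^2 - x^2)^2 =
        - 48 * C * (x^4 + y^4) + 144 * C^2 - 48 - 48 * (w * c)^2 * (C - 1)^2 * (x^2 - y^2)^2"
    by algebra
  then have tgi: "trace (matrix_inv g) = trace g"
    using e1 e2 by simp
  show ?thesis unfolding iso1 iso2 using tg tgi by (simp add: C_def)
qed

end
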